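(* The class AsLimAvg is not closed under sum: there exist automata $A_1,A_2$ in AsLimAvg over a common alphabet $\Sigma$ such that no automaton $A$ in AsLimAvg over $\Sigma$ satisfies $L_A(w)=L_{A_1}(w)+L_{A_2}(w)$ for all $w\in\Sigma^\omega$.
   Context: A probabilistic weighted automaton over a finite alphabet $\Sigma$ is a tuple $A=(Q,\rho_I,\Sigma,\delta,\gamma)$ where $Q$ is a finite set of states, $\rho_I$ is a probability distribution on $Q$, $\delta:Q\times\Sigma\to\mathcal D(Q)$ assigns to each state and letter a probability distribution on $Q$, and $\gamma:Q\times\Sigma\times Q\to\mathbb Q$ is a weight function. A run over an infinite word $w=\sigma_1\sigma_2\dots$ is a sequence $r=q_0\sigma_1q_1\sigma_2\dots$ with $\rho_I(q_0)>0$ and $\delta(q_i,\sigma_{i+1})(q_{i+1})>0$ for all $i$; its weight sequence is $\gamma(r)=v_0v_1\dots$ with $v_i=\gamma(q_i,\sigma_{i+1},q_{i+1})$. For each $w$, the probabilities of finite run prefixes induce a probability measure $\mathbb P^A$ on runs over $w$. With $\mathsf{LimAvg}(v)=\liminf_n\frac1n\sum_{i<n}v_i$, AsLimAvg automata define $L^{=1}_A(w)=\sup\{\eta\mid \mathbb P^A(\{r:\mathsf{LimAvg}(\gamma(r))\ge\eta\})=1\}$. *)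

theory Defs
  imports "HOL-Probability.Probability"
begin

text \<open>States and letters are natural numbers;
  the state set is an explicit finite set Q, the alphabet an explicit finite set Sig.\<close>

record pwa =
  states :: "nat set"
  init   :: "nat pmf"
  trans  :: "nat \<Rightarrow> nat \<Rightarrow> nat pmf"
  weight :: "nat \<Rightarrow> nat \<Rightarrow> nat \<Rightarrow> rat"

definition wf_pwa :: "nat set \<Rightarrow> pwa \<Rightarrow> bool" where
  "wf_pwa Sig A \<longleftrightarrow> finite (states A) \<and> set_pmf (init A) \<subseteq> states A \<and>
     (\<forall>q\<in>states A. \<forall>\<sigma>\<in>Sig. set_pmf (trans A q \<sigma>) \<subseteq> states A)"

text \<open>Infinite words over Sig: w i is the letter sigma_(i+1).\<close>
definition words :: "nat set \<Rightarrow> (nat \<Rightarrow> nat) set" where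
  "words Sig = {w. \<forall>i. w i \<in> Sig}"

definition prefix_prob :: "pwa \<Rightarrow> (nat \<Rightarrow> nat) \<Rightarrow> nat list \<Rightarrow> real" where
  "prefix_prob A w qs =
     pmf (init A) (qs ! 0) * (\<Prod>i<length qs - 1. pmf (trans A (qs ! i) (w i)) (qs ! Suc i))"

definition run_measure :: "pwa \<Rightarrow> (nat \<Rightarrow> nat) \<Rightarrow> nat stream measure" where
  "run_measure A w = (THE M. prob_space M \<and>
      sets M = sets (stream_space (count_space UNIV)) \<and>
      (\<forall>qs. qs \<noteq> [] \<longrightarrow>
         emeasure M {r \<in> space M. stake (length qs) r = qs} = ennreal (prefix_prob A w qs)))"

definition run_weights :: "pwa \<Rightarrow> (nat \<Rightarrow> nat) \<Rightarrow> nat stream \<Rightarrow> nat \<Rightarrow> real" where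
  "run_weights A w r i = real_of_rat (weight A (r !! i) (w i) (r !! Suc i))"

definition LimAvg :: "(nat \<Rightarrow> real) \<Rightarrow> ereal" where
  "LimAvg v = liminf (\<lambda>n. ereal ((\<Sum>i<n. v i) / real n))"

definition AsLimAvg_val :: "pwa \<Rightarrow> (nat \<Rightarrow> nat) \<Rightarrow> ereal" where
  "AsLimAvg_val A w = Sup {\<eta> :: ereal.
      emeasure (run_measure A w)
        {r \<in> space (run_measure A w). LimAvg (run_weights A w r) \<ge> \<eta>} = 1}"

end

theory Submission
  imports Defs
begin


lemma space_ss[simp]: "space (stream_space (count_space (UNIV::nat set))) = UNIV"
  by (simp add: space_stream_space)

lemma stake_eq_iff: "stake n r = qs \<longleftrightarrow> length qs = n \<and> (\<forall>i<n. r !! i = qs ! i)"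
  by (auto intro: nth_equalityI)

lemma prefix_prob_nonneg: "prefix_prob A w qs \<ge> 0"
  unfolding prefix_prob_def by (intro mult_nonneg_nonneg prod_nonneg) auto

lemma prefix_prob_snoc:
  assumes "xs \<noteq> []"
  shows "prefix_prob A w (xs @ [y]) = prefix_prob A w xs * pmf (trans A (last xs) (w (length xs - 1))) y"
proof -
  obtain k where k: "length xs = Suc k" using assms by (cases xs) auto
  have 1: "(\<Prod>i<k. pmf (trans A ((xs @ [y]) ! i) (w i)) ((xs @ [y]) ! Suc i))
        = (\<Prod>i<k. pmf (trans A (xs ! i) (w i)) (xs ! Suc i))"
    by (rule prod.cong) (auto simp: nth_append k)
  have 2: "last xs = xs ! k" using k assms by (simp add: last_conv_nth)
  have 3: "(xs @ [y]) ! 0 = xs ! 0" using k by (simp add: nth_append)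
  have 4: "(xs @ [y]) ! k = xs ! k" "(xs @ [y]) ! Suc k = y" using k by (simp_all add: nth_append)
  have "prefix_prob A w (xs @ [y]) = pmf (init A) (xs ! 0) *
     ((\<Prod>i<k. pmf (trans A ((xs @ [y]) ! i) (w i)) ((xs @ [y]) ! Suc i)) * pmf (trans A ((xs @ [y]) ! k) (w k)) ((xs @ [y]) ! Suc k))"
    unfolding prefix_prob_def using k 3 by (simp only: prod.lessThan_Suc length_append_singleton diff_Suc_1)
  also have "\<dots> = prefix_prob A w xs * pmf (trans A (last xs) (w (length xs - 1))) y"
    unfolding prefix_prob_def 1 4 2 k by simp
  finally show ?thesis .
qed

definition tabl :: "nat set \<Rightarrow> pwa \<Rightarrow> (nat \<times> nat \<Rightarrow> nat) pmf" where
  "tabl Sig A = Pi_pmf (states A \<times> Sig) 0 (\<lambda>(q,\<sigma>). trans A q \<sigma>)"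

definition Dp :: "nat set \<Rightarrow> pwa \<Rightarrow> (nat \<times> (nat \<times> nat \<Rightarrow> nat)) pmf" where
  "Dp Sig A = pair_pmf (init A) (tabl Sig A)"

primrec st :: "(nat \<Rightarrow> nat) \<Rightarrow> (nat \<times> (nat \<times> nat \<Rightarrow> nat)) stream \<Rightarrow> nat \<Rightarrow> nat" where
  "st w \<omega> 0 = fst (\<omega> !! 0)"
| "st w \<omega> (Suc n) = snd (\<omega> !! Suc n) (st w \<omega> n, w n)"

definition runmap where "runmap w \<omega> = to_stream (st w \<omega>)"

definition RM :: "nat set \<Rightarrow> pwa \<Rightarrow> (nat \<Rightarrow> nat) \<Rightarrow> nat stream measure" where
  "RM Sig A w = distr (stream_space (measure_pmf (Dp Sig A))) (stream_space (count_space UNIV)) (runmap w)"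

lemma stream_prod:
  fixes D :: "'a pmf"
  shows "emeasure (stream_space (measure_pmf D)) {\<omega>. \<forall>i<n. \<omega> !! i \<in> X i} = (\<Prod>i<n. emeasure (measure_pmf D) (X i))"
proof (induction n arbitrary: X)
  case 0
  interpret prob_space "stream_space (measure_pmf D)"
    by (rule prob_space.prob_space_stream_space) (rule prob_space_measure_pmf)
  show ?case using emeasure_space_1 by (simp add: space_stream_space)
next
  case (Suc n)
  let ?S = "stream_space (measure_pmf D)"
  have sp: "space ?S = UNIV" by (simp add: space_stream_space)
  have meas: "{\<omega>. \<forall>i<m. \<omega> !! i \<in> Y i} \<in> sets ?S" for m Y
  proof (induction m)
    case 0 show ?case using sets.top[of ?S] sp by simp
  next
    case (Suc m)
    have 1: "{\<omega>. \<omega> !! m \<in> Y m} \<in> sets ?S"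
      using measurable_sets[OF measurable_snth[of m "measure_pmf D"], of "Y m"] sp by (simp add: vimage_def)
    have "{\<omega>. \<forall>i<Suc m. \<omega> !! i \<in> Y i} = {\<omega>. \<forall>i<m. \<omega> !! i \<in> Y i} \<inter> {\<omega>. \<omega> !! m \<in> Y m}"
      by (auto simp: less_Suc_eq)
    then show ?case using Suc 1 by simp
  qed
  have "emeasure ?S {\<omega>. \<forall>i<Suc n. \<omega> !! i \<in> X i} =
     (\<integral>\<^sup>+t. emeasure ?S {x\<in>space ?S. t ## x \<in> {\<omega>. \<forall>i<Suc n. \<omega> !! i \<in> X i}} \<partial>measure_pmf D)"
    by (rule prob_space.emeasure_stream_space[OF prob_space_measure_pmf]) (rule meas)
  also have "\<dots> = (\<integral>\<^sup>+t. emeasure ?S {\<omega>. \<forall>i<n. \<omega> !! i \<in> X (Suc i)} * indicator (X 0) t \<partial>measure_pmf D)"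
    by (rule nn_integral_cong) (auto simp: sp All_less_Suc2 split: split_indicator)
  also have "\<dots> = emeasure ?S {\<omega>. \<forall>i<n. \<omega> !! i \<in> X (Suc i)} * emeasure (measure_pmf D) (X 0)"
    by (simp add: nn_integral_cmult_indicator)
  also have "\<dots> = (\<Prod>i<Suc n. emeasure (measure_pmf D) (X i))"
    using Suc[of "\<lambda>i. X (Suc i)"] by (subst prod.lessThan_Suc_shift) (simp add: mult.commute)
  finally show ?case .
qed

lemma st_meas: "(\<lambda>\<omega>. st w \<omega> n) \<in> measurable (stream_space (measure_pmf D)) (count_space UNIV)"
proof (induction n)
  case 0
  show ?case
    using measurable_compose[OF measurable_snth[of 0 "measure_pmf D"], of fst "count_space UNIV"] by simp
next
  case (Suc n)
  have "(\<lambda>\<omega>. (\<lambda>q \<omega>. snd (\<omega> !! Suc n) (q, w n)) (st w \<omega> n) \<omega>) \<in> measurable (stream_space (measure_pmf D)) (count_space UNIV)"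
    by (rule measurable_compose_countable[OF _ Suc]) (rule measurable_compose[OF measurable_snth], simp)
  then show ?case by simp
qed

lemma runmap_meas: "runmap w \<in> measurable (stream_space (measure_pmf D)) (stream_space (count_space UNIV))"
  by (rule measurable_stream_space2) (simp add: runmap_def to_stream_def st_meas)


definition cylX :: "(nat \<Rightarrow> nat) \<Rightarrow> nat list \<Rightarrow> nat \<Rightarrow> (nat \<times> (nat \<times> nat \<Rightarrow> nat)) set" where
  "cylX w qs i = (case i of 0 \<Rightarrow> {d. fst d = qs ! 0} | Suc j \<Rightarrow> {d. snd d (qs ! j, w j) = qs ! Suc j})"

lemma st_cyl: "(\<forall>i<n. st w \<omega> i = qs ! i) \<longleftrightarrow> (\<forall>i<n. \<omega> !! i \<in> cylX w qs i)"
proof (induction n)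
  case 0 then show ?case by simp
next
  case (Suc n)
  show ?case
  proof (cases n)
    case 0 then show ?thesis by (simp add: cylX_def)
  next
    case (Suc j)
    show ?thesis unfolding less_Suc_eq using Suc.IH \<open>n = Suc j\<close>
      by (auto simp: cylX_def)
  qed
qed

lemma runmap_snth: "runmap w \<omega> !! i = st w \<omega> i" by (simp add: runmap_def to_stream_def)

lemma runmap_cyl: "{\<omega>. stake (length qs) (runmap w \<omega>) = qs} = {\<omega>. \<forall>i<length qs. \<omega> !! i \<in> cylX w qs i}"
  unfolding stake_eq_iff runmap_snth st_cyl by simp

lemma emeasure_D_fst: "emeasure (measure_pmf (Dp Sig A)) {d. fst d = q} = pmf (init A) q"
proof -
  have e: "{d. fst d = q} = fst -` {q}" by auto
  have "emeasure (measure_pmf (Dp Sig A)) (fst -` {q}) = emeasure (measure_pmf (map_pmf fst (Dp Sig A))) {q}"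
    by (rule emeasure_map_pmf[symmetric])
  also have "\<dots> = pmf (init A) q" by (simp add: Dp_def map_fst_pair_pmf emeasure_pmf_single)
  finally show ?thesis unfolding e .
qed

definition cT :: "nat set \<Rightarrow> pwa \<Rightarrow> nat \<Rightarrow> nat \<Rightarrow> nat pmf" where
  "cT Sig A q \<sigma> = (if (q, \<sigma>) \<in> states A \<times> Sig then trans A q \<sigma> else return_pmf 0)"

lemma emeasure_D_snd:
  assumes "finite (states A)" "finite Sig"
  shows "emeasure (measure_pmf (Dp Sig A)) {d. snd d (q, \<sigma>) = q'} = pmf (cT Sig A q \<sigma>) q'"
proof -
  have e: "{d. snd d (q, \<sigma>) = q'} = (\<lambda>d. snd d (q, \<sigma>)) -` {q'}" by auto
  have "map_pmf (\<lambda>d. snd d (q, \<sigma>)) (Dp Sig A) = map_pmf (\<lambda>G. G (q, \<sigma>)) (map_pmf snd (Dp Sig A))"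
    by (simp add: pmf.map_comp o_def)
  also have "\<dots> = cT Sig A q \<sigma>"
    unfolding Dp_def map_snd_pair_pmf tabl_def cT_def
    by (subst Pi_pmf_component) (use assms in auto)
  finally have m: "map_pmf (\<lambda>d. snd d (q, \<sigma>)) (Dp Sig A) = cT Sig A q \<sigma>" .
  show ?thesis
    using emeasure_map_pmf[of "\<lambda>d. snd d (q, \<sigma>)" "Dp Sig A" "{q'}"]
    unfolding e m by (simp add: emeasure_pmf_single)
qed

lemma RM_cyl:
  assumes fin: "finite (states A)" "finite Sig" and n: "length qs = Suc k"
  shows "emeasure (RM Sig A w) {r. stake (length qs) r = qs} =
     ennreal (pmf (init A) (qs ! 0) * (\<Prod>i<k. pmf (cT Sig A (qs ! i) (w i)) (qs ! Suc i)))"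
proof -
  let ?S = "stream_space (measure_pmf (Dp Sig A))"
  have spS: "space ?S = UNIV" by (simp add: space_stream_space)
  have ms: "{r. stake (length qs) r = qs} \<in> sets (stream_space (count_space UNIV))"
  proof -
    have "{r. stake (length qs) r = qs} = stake (length qs) -` {qs} \<inter> space (stream_space (count_space UNIV))"
      by auto
    also have "\<dots> \<in> sets (stream_space (count_space UNIV))"
      by (rule measurable_sets[OF measurable_stake]) simp
    finally show ?thesis .
  qed
  have "emeasure (RM Sig A w) {r. stake (length qs) r = qs} = emeasure ?S (runmap w -` {r. stake (length qs) r = qs} \<inter> space ?S)"
    unfolding RM_def by (rule emeasure_distr[OF runmap_meas ms])
  also have "\<dots> = emeasure ?S {\<omega>. \<forall>i<length qs. \<omega> !! i \<in> cylX w qs i}"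
    by (simp add: spS runmap_cyl)
  also have "\<dots> = (\<Prod>i<Suc k. emeasure (measure_pmf (Dp Sig A)) (cylX w qs i))"
    by (simp add: stream_prod n)
  also have "\<dots> = emeasure (measure_pmf (Dp Sig A)) (cylX w qs 0) * (\<Prod>i<k. emeasure (measure_pmf (Dp Sig A)) (cylX w qs (Suc i)))"
    by (rule prod.lessThan_Suc_shift)
  also have "\<dots> = ennreal (pmf (init A) (qs ! 0)) * (\<Prod>i<k. ennreal (pmf (cT Sig A (qs ! i) (w i)) (qs ! Suc i)))"
    by (simp add: cylX_def emeasure_D_fst emeasure_D_snd[OF fin])
  also have "\<dots> = ennreal (pmf (init A) (qs ! 0) * (\<Prod>i<k. pmf (cT Sig A (qs ! i) (w i)) (qs ! Suc i)))"
    by (simp add: prod_ennreal ennreal_mult prod_nonneg)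
  finally show ?thesis .
qed

lemma prod_match:
  assumes wf: "wf_pwa Sig A" and w: "w \<in> words Sig" and n: "length qs = Suc k"
  shows "pmf (init A) (qs ! 0) * (\<Prod>i<k. pmf (cT Sig A (qs ! i) (w i)) (qs ! Suc i)) = prefix_prob A w qs"
proof (cases "\<forall>i<k. qs ! i \<in> states A")
  case True
  have "(\<Prod>i<k. pmf (cT Sig A (qs ! i) (w i)) (qs ! Suc i)) = (\<Prod>i<k. pmf (trans A (qs ! i) (w i)) (qs ! Suc i))"
    using True w by (intro prod.cong) (auto simp: cT_def words_def)
  then show ?thesis unfolding prefix_prob_def n by simp
next
  case False
  then obtain j where j: "j < k" "qs ! j \<notin> states A" "\<forall>i<j. qs ! i \<in> states A"
    using exists_least_iff[of "\<lambda>j. j < k \<and> qs ! j \<notin> states A"] by (metis less_trans)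
  show ?thesis
  proof (cases j)
    case 0
    have "pmf (init A) (qs ! 0) = 0" using wf j 0 by (auto simp: wf_pwa_def pmf_eq_0_set_pmf)
    then show ?thesis unfolding prefix_prob_def by simp
  next
    case (Suc j')
    have sj: "qs ! j' \<in> states A" "j' < k" using j Suc by auto
    have sub: "set_pmf (trans A (qs ! j') (w j')) \<subseteq> states A"
      using wf sj w by (auto simp: wf_pwa_def words_def)
    have z: "pmf (trans A (qs ! j') (w j')) (qs ! Suc j') = 0"
      using sub j(2) Suc by (metis pmf_eq_0_set_pmf subsetD)
    have z2: "pmf (cT Sig A (qs ! j') (w j')) (qs ! Suc j') = 0"
      using z sj w by (auto simp: cT_def words_def)
    have p1: "(\<Prod>i<k. pmf (trans A (qs ! i) (w i)) (qs ! Suc i)) = 0"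
      by (rule prod_zero) (use z sj in auto)
    have p2: "(\<Prod>i<k. pmf (cT Sig A (qs ! i) (w i)) (qs ! Suc i)) = 0"
      by (rule prod_zero) (use z2 sj in auto)
    have "prefix_prob A w qs = 0" unfolding prefix_prob_def n using p1 by simp
    then show ?thesis using p2 by simp
  qed
qed

definition RMP :: "pwa \<Rightarrow> (nat \<Rightarrow> nat) \<Rightarrow> nat stream measure \<Rightarrow> bool" where
  "RMP A w M \<longleftrightarrow> prob_space M \<and>
      sets M = sets (stream_space (count_space UNIV)) \<and>
      (\<forall>qs. qs \<noteq> [] \<longrightarrow>
         emeasure M {r \<in> space M. stake (length qs) r = qs} = ennreal (prefix_prob A w qs))"

lemma RM_RMP:
  assumes wf: "wf_pwa Sig A" and w: "w \<in> words Sig" and fS: "finite Sig"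
  shows "RMP A w (RM Sig A w)"
  unfolding RMP_def
proof (intro conjI allI impI)
  show "prob_space (RM Sig A w)"
    unfolding RM_def
    by (rule prob_space.prob_space_distr[OF prob_space.prob_space_stream_space[OF prob_space_measure_pmf] runmap_meas])
  show "sets (RM Sig A w) = sets (stream_space (count_space UNIV))" by (simp add: RM_def)
  fix qs :: "nat list" assume "qs \<noteq> []"
  then obtain k where n: "length qs = Suc k" by (cases qs) auto
  have sp: "space (RM Sig A w) = UNIV" by (simp add: RM_def)
  have fin: "finite (states A)" using wf by (simp add: wf_pwa_def)
  show "emeasure (RM Sig A w) {r \<in> space (RM Sig A w). stake (length qs) r = qs} = ennreal (prefix_prob A w qs)"
    using RM_cyl[OF fin fS n, of w] prod_match[OF wf w n] sp by simp
qed

lemma RMP_unique: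
  assumes "RMP A w M" "RMP A w N" shows "M = N"
proof (rule stream_space_eq_sstart[of UNIV])
  show "countable (UNIV :: nat set)" by simp
  show "prob_space M" "prob_space N" "sets M = sets (stream_space (count_space UNIV))"
    "sets N = sets (stream_space (count_space UNIV))" using assms by (auto simp: RMP_def)
  show "AE x in M. x \<in> streams UNIV" "AE x in N. x \<in> streams UNIV" by auto
  fix xs :: "nat list" assume "xs \<noteq> []"
  have spM: "space M = UNIV" using assms(1) unfolding RMP_def by (metis sets_eq_imp_space_eq space_ss)
  have spN: "space N = UNIV" using assms(2) unfolding RMP_def by (metis sets_eq_imp_space_eq space_ss)
  have e: "sstart UNIV xs = {r. stake (length xs) r = xs}"
    by (auto simp: sstart_eq stake_eq_iff)
  show "emeasure M (sstart UNIV xs) = emeasure N (sstart UNIV xs)"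
    using assms \<open>xs \<noteq> []\<close> spM spN unfolding e RMP_def by auto
qed

lemma run_measure_eq:
  assumes wf: "wf_pwa Sig A" and w: "w \<in> words Sig" and fS: "finite Sig"
  shows "run_measure A w = RM Sig A w"
proof -
  have "(THE M. RMP A w M) = RM Sig A w"
    by (rule the_equality) (use RM_RMP[OF assms] RMP_unique in auto)
  then show ?thesis unfolding run_measure_def RMP_def .
qed

lemma run_measure_RMP:
  assumes wf: "wf_pwa Sig A" and w: "w \<in> words Sig" and fS: "finite Sig"
  shows "RMP A w (run_measure A w)"
  using RM_RMP[OF assms] run_measure_eq[OF assms] by simp




definition Fin :: "nat set \<Rightarrow> nat \<Rightarrow> nat list set" where
  "Fin S k = {xs. set xs \<subseteq> S \<and> length xs = k}"

lemma finite_Fin: "finite S \<Longrightarrow> finite (Fin S k)"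
  unfolding Fin_def using finite_lists_length_eq by auto

lemma Fin_add: "Fin S (a + b) = (\<lambda>(xs,ys). xs @ ys) ` (Fin S a \<times> Fin S b)"
proof
  show "Fin S (a + b) \<subseteq> (\<lambda>(xs,ys). xs @ ys) ` (Fin S a \<times> Fin S b)"
  proof
    fix xs assume "xs \<in> Fin S (a + b)"
    then have "(take a xs, drop a xs) \<in> Fin S a \<times> Fin S b"
      by (auto simp: Fin_def dest: in_set_takeD in_set_dropD)
    then show "xs \<in> (\<lambda>(xs,ys). xs @ ys) ` (Fin S a \<times> Fin S b)"
      by (intro image_eqI[of _ _ "(take a xs, drop a xs)"]) auto
  qed
qed (auto simp: Fin_def)

lemma inj_Fin_add: "inj_on (\<lambda>(xs,ys). xs @ ys) (Fin S a \<times> Fin S b)"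
  by (auto simp: inj_on_def Fin_def)

lemma Fin_1: "Fin S (Suc 0) = (\<lambda>q. [q]) ` S"
  by (auto simp: Fin_def length_Suc_conv)

lemma sum_Fin_add:
  "finite S \<Longrightarrow> (\<Sum>xs\<in>Fin S (a + b). f xs) = (\<Sum>ps\<in>Fin S a. \<Sum>rs\<in>Fin S b. f (ps @ rs))"
proof -
  assume fin: "finite S"
  have "(\<Sum>xs\<in>Fin S (a + b). f xs) = (\<Sum>x\<in>Fin S a \<times> Fin S b. f ((\<lambda>(xs,ys). xs @ ys) x))"
    by (simp add: Fin_add sum.reindex[OF inj_Fin_add])
  also have "\<dots> = (\<Sum>x\<in>Fin S a \<times> Fin S b. (\<lambda>(ps,rs). f (ps @ rs)) x)"
    by (rule sum.cong) auto
  also have "\<dots> = (\<Sum>ps\<in>Fin S a. \<Sum>rs\<in>Fin S b. f (ps @ rs))"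
    by (rule sum.cartesian_product[symmetric])
  finally show ?thesis .
qed

lemma sum_Fin_1: "(\<Sum>xs\<in>Fin S (Suc 0). f xs) = (\<Sum>q\<in>S. f [q])"
  by (simp add: Fin_1 sum.reindex inj_on_def)

lemma sum_prefix_prob:
  assumes wf: "wf_pwa Sig A" and w: "w \<in> words Sig"
  shows "(\<Sum>qs\<in>Fin (states A) (Suc k). prefix_prob A w qs) = 1"
proof (induction k)
  have fin: "finite (states A)" "set_pmf (init A) \<subseteq> states A" using wf by (auto simp: wf_pwa_def)
  case 0
  show ?case using sum_pmf_eq_1[OF fin] by (simp add: sum_Fin_1 prefix_prob_def)
next
  case (Suc k)
  have fin: "finite (states A)" using wf by (auto simp: wf_pwa_def)
  have "(\<Sum>qs\<in>Fin (states A) (Suc (Suc k)). prefix_prob A w qs)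
     = (\<Sum>ps\<in>Fin (states A) (Suc k). \<Sum>rs\<in>Fin (states A) (Suc 0). prefix_prob A w (ps @ rs))"
    using sum_Fin_add[OF fin, where a="Suc k" and b="Suc 0"] by simp
  also have "\<dots> = (\<Sum>ps\<in>Fin (states A) (Suc k). prefix_prob A w ps * (\<Sum>q\<in>states A. pmf (trans A (last ps) (w k)) q))"
  proof (rule sum.cong[OF refl])
    fix ps assume ps: "ps \<in> Fin (states A) (Suc k)"
    then have ne: "ps \<noteq> []" and len: "length ps = Suc k" by (auto simp: Fin_def)
    show "(\<Sum>rs\<in>Fin (states A) (Suc 0). prefix_prob A w (ps @ rs)) = prefix_prob A w ps * (\<Sum>q\<in>states A. pmf (trans A (last ps) (w k)) q)"
      unfolding sum_Fin_1 using ne len by (simp add: prefix_prob_snoc sum_distrib_left)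
  qed
  also have "\<dots> = (\<Sum>ps\<in>Fin (states A) (Suc k). prefix_prob A w ps)"
  proof (rule sum.cong[OF refl])
    fix ps assume ps: "ps \<in> Fin (states A) (Suc k)"
    then have "last ps \<in> states A" by (auto simp: Fin_def) (metis last_in_set list.size(3) nat.distinct(1) subsetD)
    moreover have "w k \<in> Sig" using w by (auto simp: words_def)
    ultimately have "(\<Sum>q\<in>states A. pmf (trans A (last ps) (w k)) q) = 1"
      using wf fin by (intro sum_pmf_eq_1) (auto simp: wf_pwa_def)
    then show "prefix_prob A w ps * (\<Sum>q\<in>states A. pmf (trans A (last ps) (w k)) q) = prefix_prob A w ps" by simp
  qed
  finally show ?case using Suc by simp
qed

lemma sets_stake_set:
  fixes M :: "nat stream measure"
  assumes "sets M = sets (stream_space (count_space UNIV))"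
  shows "{r. stake k r \<in> L} \<in> sets M"
proof -
  have "{r. stake k r \<in> L} = stake k -` L \<inter> space (stream_space (count_space UNIV))" by auto
  also have "\<dots> \<in> sets (stream_space (count_space UNIV))"
    by (rule measurable_sets[OF measurable_stake]) simp
  finally show ?thesis using assms by simp
qed

locale RMctx =
  fixes Sig :: "nat set" and A :: pwa and w :: "nat \<Rightarrow> nat"
  assumes wf: "wf_pwa Sig A" and w: "w \<in> words Sig" and fS: "finite Sig"
begin

abbreviation "P \<equiv> run_measure A w"

lemma RMP: "RMP A w P" by (rule run_measure_RMP[OF wf w fS])

lemma prob: "prob_space P" using RMP by (simp add: RMP_def)

sublocale p: prob_space P by (rule prob)

lemma sets_P: "sets P = sets (stream_space (count_space UNIV))" using RMP by (simp add: RMP_def)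

lemma space_P: "space P = UNIV" using sets_P by (metis sets_eq_imp_space_eq space_ss)

lemma meas_stake[measurable]: "{r. stake k r \<in> L} \<in> sets P"
  by (rule sets_stake_set[OF sets_P])

lemma finS: "finite (states A)" using wf by (simp add: wf_pwa_def)

lemma cyl: "qs \<noteq> [] \<Longrightarrow> measure P {r. stake (length qs) r = qs} = prefix_prob A w qs"
  using RMP unfolding RMP_def space_P by (simp add: measure_def prefix_prob_nonneg)

lemma stake_Union: "{r. stake k r \<in> L \<inter> F} = (\<Union>qs\<in>L \<inter> F. {r. stake k r = qs})"
  by auto

lemma meas_Fin_sum:
  assumes "k > 0"
  shows "measure P {r. stake k r \<in> L \<inter> Fin (states A) k} = (\<Sum>qs\<in>L \<inter> Fin (states A) k. prefix_prob A w qs)"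
proof -
  have "measure P {r. stake k r \<in> L \<inter> Fin (states A) k} = (\<Sum>qs\<in>L \<inter> Fin (states A) k. measure P {r. stake k r = qs})"
    unfolding stake_Union
  proof (rule measure_finite_Union)
    show "finite (L \<inter> Fin (states A) k)" using finite_Fin[OF finS] by auto
    show "(\<lambda>qs. {r. stake k r = qs}) ` (L \<inter> Fin (states A) k) \<subseteq> sets P"
      using meas_stake[of k "{_}"] by auto
    show "disjoint_family_on (\<lambda>qs. {r. stake k r = qs}) (L \<inter> Fin (states A) k)"
      by (auto simp: disjoint_family_on_def)
    show "emeasure P {r. stake k r = qs} \<noteq> \<infinity>" for qs by simp
  qed
  also have "\<dots> = (\<Sum>qs\<in>L \<inter> Fin (states A) k. prefix_prob A w qs)"
    using assms cyl by (intro sum.cong) (auto simp: Fin_def)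
  finally show ?thesis .
qed

lemma valid_k: "k > 0 \<Longrightarrow> AE r in P. stake k r \<in> Fin (states A) k"
proof -
  assume k: "k > 0"
  then obtain j where j: "k = Suc j" by (cases k) auto
  have "measure P {r. stake k r \<in> UNIV \<inter> Fin (states A) k} = 1"
    using meas_Fin_sum[OF k, of UNIV] sum_prefix_prob[OF wf w, of j] j by simp
  then show ?thesis using p.AE_prob_1 by force
qed

lemma G: "k > 0 \<Longrightarrow> measure P {r. stake k r \<in> L} = (\<Sum>qs\<in>Fin (states A) k. if qs \<in> L then prefix_prob A w qs else 0)"
proof -
  assume k: "k > 0"
  have "measure P {r. stake k r \<in> L} = measure P {r. stake k r \<in> L \<inter> Fin (states A) k}"
    by (rule measure_eq_AE) (use valid_k[OF k] meas_stake[of k L] meas_stake[of k "L \<inter> Fin (states A) k"] in auto)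
  also have "\<dots> = (\<Sum>qs\<in>L \<inter> Fin (states A) k. prefix_prob A w qs)" by (rule meas_Fin_sum[OF k])
  also have "\<dots> = (\<Sum>qs\<in>Fin (states A) k. if qs \<in> L then prefix_prob A w qs else 0)"
    by (simp add: sum.If_cases finite_Fin[OF finS] Int_commute)
  finally show ?thesis .
qed

lemma valid: "AE r in P. \<forall>i. r !! i \<in> states A"
proof -
  have "AE r in P. r !! i \<in> states A" for i
    using valid_k[OF zero_less_Suc, of i]
  proof eventually_elim
    case (elim r)
    have "r !! i \<in> set (stake (Suc i) r)"
      by (metis lessI length_stake nth_mem stake_nth)
    then show ?case using elim by (auto simp: Fin_def)
  qed
  then show ?thesis by (simp add: AE_all_countable)
qed

end




definition Aq :: "pwa \<Rightarrow> nat \<Rightarrow> pwa" where "Aq A q = A\<lparr>init := return_pmf q\<rparr>"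

lemma Aq_simps[simp]: "states (Aq A q) = states A" "trans (Aq A q) = trans A" "weight (Aq A q) = weight A"
  "init (Aq A q) = return_pmf q"
  by (simp_all add: Aq_def)

lemma wf_Aq: "wf_pwa Sig A \<Longrightarrow> q \<in> states A \<Longrightarrow> wf_pwa Sig (Aq A q)"
  by (simp add: wf_pwa_def)

lemma words_shift: "w \<in> words Sig \<Longrightarrow> (\<lambda>i. w (t + i)) \<in> words Sig"
  by (simp add: words_def)

lemma pp_factor:
  "rs \<noteq> [] \<Longrightarrow> rs ! 0 = q \<Longrightarrow>
   prefix_prob A w (ps @ rs) = prefix_prob A w (ps @ [q]) * prefix_prob (Aq A q) (\<lambda>i. w (length ps + i)) rs"
proof (induction rs rule: rev_induct)
  case Nil then show ?case by simp
next
  case (snoc y rs)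
  show ?case
  proof (cases "rs = []")
    case True
    then have "y = q" using snoc by simp
    then show ?thesis using True by (simp add: prefix_prob_def)
  next
    case False
    have q: "rs ! 0 = q" using snoc False by (simp add: nth_append)
    note IH = snoc.IH[OF False q]
    have l1: "last (ps @ rs) = last rs" "length (ps @ rs) - 1 = length ps + (length rs - 1)"
      using False by (auto, cases rs, auto)
    have "prefix_prob A w (ps @ rs @ [y]) = prefix_prob A w (ps @ rs) * pmf (trans A (last (ps@rs)) (w (length (ps@rs) - 1))) y"
      using prefix_prob_snoc[of "ps @ rs" A w y] False by simp
    also have "\<dots> = prefix_prob A w (ps @ [q]) * (prefix_prob (Aq A q) (\<lambda>i. w (length ps + i)) rs *
        pmf (trans (Aq A q) (last rs) ((\<lambda>i. w (length ps + i)) (length rs - 1))) y)"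
      unfolding IH l1 by simp
    also have "\<dots> = prefix_prob A w (ps @ [q]) * prefix_prob (Aq A q) (\<lambda>i. w (length ps + i)) (rs @ [y])"
      using prefix_prob_snoc[of rs "Aq A q" "\<lambda>i. w (length ps + i)" y] False by simp
    finally show ?thesis by simp
  qed
qed

lemma pp_Aq_zero: "rs \<noteq> [] \<Longrightarrow> rs ! 0 \<noteq> q \<Longrightarrow> prefix_prob (Aq A q) w' rs = 0"
  by (simp add: prefix_prob_def)

lemma RMctx_Aq: "RMctx Sig A w \<Longrightarrow> q \<in> states A \<Longrightarrow> RMctx Sig (Aq A q) (\<lambda>i. w (t + i))"
  unfolding RMctx_def using wf_Aq words_shift by blast

context RMctx begin

lemma markov_sum:
  assumes q: "q \<in> states A"
  shows "measure P {r. r !! t = q \<and> stake (Suc m) (sdrop t r) \<in> L} =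
     (\<Sum>ps\<in>Fin (states A) t. prefix_prob A w (ps @ [q])) * measure (run_measure (Aq A q) (\<lambda>i. w (t+i))) {r. stake (Suc m) r \<in> L}"
proof -
  interpret Q: RMctx Sig "Aq A q" "\<lambda>i. w (t+i)" by (rule RMctx_Aq[OF _ q]) unfold_locales
  let ?L' = "{xs. xs ! t = q \<and> drop t xs \<in> L}"
  have seteq: "{r. r !! t = q \<and> stake (Suc m) (sdrop t r) \<in> L} = {r. stake (t + Suc m) r \<in> ?L'}"
  proof -
    have eq: "stake (t + Suc m) r = stake t r @ stake (Suc m) (sdrop t r)" for r
      by (rule stake_add[symmetric])
    have a: "stake (t + Suc m) r ! t = r !! t" for r
      unfolding eq by (simp add: nth_append del: stake.simps)
    have b: "drop t (stake (t + Suc m) r) = stake (Suc m) (sdrop t r)" for r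
      by (subst eq) (simp del: stake.simps stake_add)
    show ?thesis by (intro Collect_cong) (simp only: mem_Collect_eq a b)
  qed
  have "measure P {r. stake (t + Suc m) r \<in> ?L'} = (\<Sum>xs\<in>Fin (states A) (t + Suc m). if xs \<in> ?L' then prefix_prob A w xs else 0)"
    by (rule G) simp
  also have "\<dots> = (\<Sum>ps\<in>Fin (states A) t. \<Sum>rs\<in>Fin (states A) (Suc m). if ps @ rs \<in> ?L' then prefix_prob A w (ps @ rs) else 0)"
    by (rule sum_Fin_add[OF finS])
  also have "\<dots> = (\<Sum>ps\<in>Fin (states A) t. \<Sum>rs\<in>Fin (states A) (Suc m). prefix_prob A w (ps @ [q]) *
        (if rs \<in> L then prefix_prob (Aq A q) (\<lambda>i. w (t+i)) rs else 0))"
  proof (intro sum.cong refl)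
    fix ps rs assume ps: "ps \<in> Fin (states A) t" and rs: "rs \<in> Fin (states A) (Suc m)"
    have lp: "length ps = t" using ps by (simp add: Fin_def)
    have ne: "rs \<noteq> []" using rs by (auto simp: Fin_def)
    have e1: "(ps @ rs) ! t = rs ! 0" "drop t (ps @ rs) = rs" using lp by (auto simp: nth_append)
    show "(if ps @ rs \<in> ?L' then prefix_prob A w (ps @ rs) else 0) = prefix_prob A w (ps @ [q]) *
        (if rs \<in> L then prefix_prob (Aq A q) (\<lambda>i. w (t+i)) rs else 0)"
    proof (cases "rs ! 0 = q")
      case True
      then show ?thesis using pp_factor[OF ne True, of A w ps] e1 lp by simp
    next
      case False
      then show ?thesis using pp_Aq_zero[OF ne False] e1 by simp
    qed
  qed
  also have "\<dots> = (\<Sum>ps\<in>Fin (states A) t. prefix_prob A w (ps @ [q])) *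
      (\<Sum>rs\<in>Fin (states A) (Suc m). if rs \<in> L then prefix_prob (Aq A q) (\<lambda>i. w (t+i)) rs else 0)"
    by (simp add: sum_product)
  also have "\<dots> = (\<Sum>ps\<in>Fin (states A) t. prefix_prob A w (ps @ [q])) * measure (run_measure (Aq A q) (\<lambda>i. w (t+i))) {r. stake (Suc m) r \<in> L}"
    using Q.G[of "Suc m" L] by simp
  finally show ?thesis unfolding seteq .
qed

lemma prob_snth:
  assumes q: "q \<in> states A"
  shows "measure P {r. r !! t = q} = (\<Sum>ps\<in>Fin (states A) t. prefix_prob A w (ps @ [q]))"
proof -
  interpret Q: RMctx Sig "Aq A q" "\<lambda>i. w (t+i)" by (rule RMctx_Aq[OF _ q]) unfold_locales
  have "measure (run_measure (Aq A q) (\<lambda>i. w (t+i))) {r. stake (Suc 0) r \<in> UNIV} = 1"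
    using Q.p.prob_space Q.space_P by simp
  then show ?thesis using markov_sum[OF q, of t 0 UNIV] by simp
qed

lemma markov:
  assumes q: "q \<in> states A"
  shows "measure P {r. r !! t = q \<and> stake (Suc m) (sdrop t r) \<in> L} =
     measure P {r. r !! t = q} * measure (run_measure (Aq A q) (\<lambda>i. w (t+i))) {r. stake (Suc m) r \<in> L}"
  using markov_sum[OF q] prob_snth[OF q] by simp

end

lemma agree:
  assumes "RMctx Sig A y" "RMctx Sig A y'" "\<forall>i<m. y i = y' i"
  shows "measure (run_measure A y) {r. stake (Suc m) r \<in> L} = measure (run_measure A y') {r. stake (Suc m) r \<in> L}"
proof -
  interpret Y: RMctx Sig A y by fact
  interpret Y': RMctx Sig A y' by fact
  have pp: "prefix_prob A y qs = prefix_prob A y' qs" if "length qs = Suc m" for qs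
    unfolding prefix_prob_def using that assms(3) by (intro arg_cong2[where f="(*)"] refl prod.cong) auto
  have "(\<Sum>qs\<in>Fin (states A) (Suc m). if qs \<in> L then prefix_prob A y qs else 0) =
        (\<Sum>qs\<in>Fin (states A) (Suc m). if qs \<in> L then prefix_prob A y' qs else 0)"
    by (rule sum.cong) (auto simp: Fin_def pp)
  then show ?thesis unfolding Y.G[of "Suc m" L, OF zero_less_Suc] Y'.G[of "Suc m" L, OF zero_less_Suc] .
qed




lemma meas_rw: "(\<lambda>r. run_weights A w r i) \<in> borel_measurable (stream_space (count_space UNIV))"
proof -
  have inner: "(\<lambda>r. (\<lambda>b r. real_of_rat (weight A a (w i) b)) (r !! Suc i) r) \<in> borel_measurable (stream_space (count_space UNIV))" for a
    by (rule measurable_compose_countable[OF measurable_const measurable_snth]) simp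
  have "(\<lambda>r. (\<lambda>a r. real_of_rat (weight A a (w i) (r !! Suc i))) (r !! i) r) \<in> borel_measurable (stream_space (count_space UNIV))"
    by (rule measurable_compose_countable[OF _ measurable_snth]) (use inner in simp)
  then show ?thesis by (simp add: run_weights_def)
qed

lemma meas_LimAvg: "(\<lambda>r. LimAvg (run_weights A w r)) \<in> borel_measurable (stream_space (count_space UNIV))"
  unfolding LimAvg_def
  apply (rule borel_measurable_liminf)
  apply (rule borel_measurable_ereal)
  apply (rule borel_measurable_divide)
   apply (rule borel_measurable_sum)
   apply (rule meas_rw)
  apply (rule borel_measurable_const)
  done




lemma liminf_le_freq:
  fixes X :: "nat \<Rightarrow> ereal"
  assumes "\<forall>N. \<exists>n\<ge>N. X n \<le> c"
  shows "liminf X \<le> c"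
proof (rule ccontr)
  assume "\<not> liminf X \<le> c"
  then have "c < liminf X" by simp
  then have "eventually (\<lambda>n. c < X n) sequentially"
    using le_Liminf_iff[of "liminf X" sequentially X] by auto
  then obtain N where "\<forall>n\<ge>N. c < X n" by (auto simp: eventually_sequentially)
  with assms show False by (meson not_le)
qed

lemma LimAvg_tendsto:
  assumes "(\<lambda>n. (\<Sum>i<n. g i) / real n) \<longlonglongrightarrow> c"
  shows "LimAvg g = ereal c"
  unfolding LimAvg_def by (rule lim_imp_Liminf) (use assms in \<open>auto intro: tendsto_ereal\<close>)

lemma sum_ev_const:
  fixes g :: "nat \<Rightarrow> real"
  assumes "\<forall>i\<ge>t. g i = 0" "n \<ge> t"
  shows "(\<Sum>i<n. g i) = (\<Sum>i<t. (g i :: real))"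
  using assms(2)
proof (induction n rule: dec_induct)
  case (step n) then show ?case using assms(1) by (simp add: lessThan_Suc)
qed simp

lemma LimAvg_ev0:
  fixes g :: "nat \<Rightarrow> real"
  assumes "\<forall>i\<ge>t. g i = 0"
  shows "LimAvg g = 0"
proof -
  have "(\<lambda>n. (\<Sum>i<n. g i) / real n) \<longlonglongrightarrow> 0"
  proof (rule Lim_transform_eventually)
    show "(\<lambda>n. (\<Sum>i<t. g i) / real n) \<longlonglongrightarrow> 0" by (rule lim_const_over_n)
    show "eventually (\<lambda>n. (\<Sum>i<t. g i) / real n = (\<Sum>i<n. g i) / real n) sequentially"
    proof (rule eventually_sequentiallyI[of t])
      fix n assume "t \<le> n"
      then show "(\<Sum>i<t. g i) / real n = (\<Sum>i<n. g i) / real n" using sum_ev_const[OF assms, of n] by simp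
    qed
  qed
  then have "LimAvg g = ereal 0" by (rule LimAvg_tendsto)
  then show ?thesis by (simp add: zero_ereal_def)
qed

lemma LimAvg_ev1:
  fixes g :: "nat \<Rightarrow> real"
  assumes "\<forall>i\<ge>t. g i = 1"
  shows "LimAvg g = 1"
proof -
  define h where "h i = g i - 1" for i
  have h0: "\<forall>i\<ge>t. h i = 0" using assms by (simp add: h_def)
  have lim0: "(\<lambda>n. 1 + (\<Sum>i<t. h i) / real n) \<longlonglongrightarrow> 1 + 0"
    by (intro tendsto_add tendsto_const lim_const_over_n)
  have ev: "eventually (\<lambda>n. 1 + (\<Sum>i<t. h i) / real n = (\<Sum>i<n. g i) / real n) sequentially"
  proof (rule eventually_sequentiallyI[of "Suc t"])
    fix n assume n: "Suc t \<le> n"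
    have "(\<Sum>i<n. g i) = (\<Sum>i<n. h i) + real n" by (simp add: h_def sum_subtractf)
    also have "(\<Sum>i<n. h i) = (\<Sum>i<t. h i)" using sum_ev_const[OF h0, of n] n by simp
    finally show "1 + (\<Sum>i<t. h i) / real n = (\<Sum>i<n. g i) / real n"
      using n by (simp add: field_simps)
  qed
  have "(\<lambda>n. (\<Sum>i<n. g i) / real n) \<longlonglongrightarrow> 1"
    using Lim_transform_eventually[OF lim0 ev] by simp
  then have "LimAvg g = ereal 1" by (rule LimAvg_tendsto)
  then show ?thesis by (simp add: one_ereal_def)
qed



context RMctx begin

lemma LA_set[measurable]: "{r. \<eta> \<le> LimAvg (run_weights A w r)} \<in> sets P"
proof -
  have "(\<lambda>r. LimAvg (run_weights A w r)) -` {\<eta>..} \<inter> space (stream_space (count_space UNIV)) \<in> sets (stream_space (count_space UNIV))"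
    by (rule measurable_sets[OF meas_LimAvg]) (simp add: borel_closed)
  then show ?thesis using sets_P by (simp add: vimage_def)
qed

lemma val_ge:
  assumes "AE r in P. \<eta> \<le> LimAvg (run_weights A w r)"
  shows "\<eta> \<le> AsLimAvg_val A w"
proof -
  have "emeasure P {r. \<eta> \<le> LimAvg (run_weights A w r)} = 1"
    by (rule p.emeasure_eq_1_AE[OF LA_set]) (use assms in simp)
  then show ?thesis unfolding AsLimAvg_val_def space_P by (intro Sup_upper) simp
qed

lemma val_AE:
  assumes "\<eta> < AsLimAvg_val A w"
  shows "AE r in P. \<eta> \<le> LimAvg (run_weights A w r)"
proof -
  obtain x where x: "emeasure P {r. x \<le> LimAvg (run_weights A w r)} = 1" "\<eta> < x"
    using assms unfolding AsLimAvg_val_def space_P less_Sup_iff by auto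
  have "AE r in P. x \<le> LimAvg (run_weights A w r)"
    by (rule p.AE_I_eq_1) (use x LA_set in \<open>simp_all add: space_P\<close>)
  then show ?thesis by eventually_elim (use x(2) in auto)
qed

lemma val_eq:
  assumes "AE r in P. LimAvg (run_weights A w r) = c"
  shows "AsLimAvg_val A w = c"
proof (rule antisym)
  show "c \<le> AsLimAvg_val A w" by (rule val_ge) (use assms in \<open>auto elim: eventually_mono\<close>)
  show "AsLimAvg_val A w \<le> c"
  proof (rule ccontr)
    assume "\<not> AsLimAvg_val A w \<le> c"
    then have "c < AsLimAvg_val A w" by simp
    then obtain \<eta> where e: "c < \<eta>" "\<eta> < AsLimAvg_val A w" using dense by blast
    have "AE r in P. False"
      using val_AE[OF e(2)] assms by eventually_elim (use e(1) in auto)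
    then show False by simp
  qed
qed

end




lemma sum_split:
  fixes f :: "nat \<Rightarrow> real"
  shows "(\<Sum>i<a + b. f i) = (\<Sum>i<a. f i) + (\<Sum>i<b. f (a + i))"
  by (induction b) (simp_all add: lessThan_Suc add.assoc)

lemma sum_lower:
  fixes f :: "nat \<Rightarrow> real"
  assumes "\<And>i. - c \<le> f i"
  shows "- c * real m \<le> (\<Sum>i<m. f i)"
proof -
  have "(\<Sum>i<m. - c) \<le> (\<Sum>i<m. f i)" by (rule sum_mono) (use assms in auto)
  then show ?thesis by (simp add: mult.commute)
qed

lemma find_block:
  fixes t :: "nat \<Rightarrow> nat"
  assumes tinc: "\<And>k. t k < t (Suc k)" and n: "t a \<le> n"
  shows "\<exists>k\<ge>a. t k \<le> n \<and> n < t (Suc k)"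
proof -
  have tge: "k \<le> t k" for k by (induction k) (auto intro: le_less_trans[OF _ tinc] Suc_leI)
  have mono: "k \<le> k' \<Longrightarrow> t k \<le> t k'" for k k' using tinc by (simp add: lift_Suc_mono_le less_imp_le)
  have ex: "\<exists>k. n < t k" using tge[of "Suc n"] by (intro exI[of _ "Suc n"]) simp
  define k0 where "k0 = (LEAST k. n < t k)"
  have k0: "n < t k0" unfolding k0_def by (rule LeastI_ex[OF ex])
  have min: "\<And>k. n < t k \<Longrightarrow> k0 \<le> k" unfolding k0_def by (rule Least_le)
  have "k0 \<noteq> 0"
  proof
    assume "k0 = 0"
    with k0 have "n < t 0" by simp
    moreover have "t 0 \<le> t a" by (rule mono) simp
    ultimately show False using n by simp
  qed
  then obtain k where k: "k0 = Suc k" by (cases k0) auto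
  have "t k \<le> n"
  proof (rule ccontr)
    assume "\<not> t k \<le> n" then have "n < t k" by simp
    then have "k0 \<le> k" by (rule min)
    with k show False by simp
  qed
  moreover have "a \<le> k"
  proof (rule ccontr)
    assume "\<not> a \<le> k" then have "Suc k \<le> a" by simp
    then have "t (Suc k) \<le> t a" by (rule mono)
    then show False using k0 k n by simp
  qed
  ultimately show ?thesis using k0 k by auto
qed

lemma block_arith:
  fixes vw :: "nat \<Rightarrow> real" and t N :: "nat \<Rightarrow> nat" and M :: nat and \<epsilon> :: real
  assumes bound: "\<And>i. \<bar>vw i\<bar> \<le> real M"
    and tinc: "\<And>k. t k < t (Suc k)"
    and eps: "0 < \<epsilon>" "(real M + 2) * \<epsilon> \<le> 1/4"
    and Nle: "\<And>k. N k \<le> t (Suc k) - t k"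
    and Neps: "\<And>k. 1 \<le> k \<Longrightarrow> real (N k) \<le> \<epsilon> * real (t k)"
    and good: "\<And>k m. K \<le> k \<Longrightarrow> N k \<le> m \<Longrightarrow> m \<le> t (Suc k) - t k \<Longrightarrow> (1-\<epsilon>) * real m \<le> (\<Sum>i<m. vw (t k + i))"
  shows "ereal (1/2) \<le> LimAvg vw"
proof -
  define K' where "K' = max K 1"
  define S where "S n = (\<Sum>i<n. vw i)" for n
  have low: "- real M \<le> vw i" for i using bound[of i] by linarith
  have Slow: "- real M * real n \<le> S n" for n unfolding S_def by (rule sum_lower[OF low])
  have mono: "k \<le> k' \<Longrightarrow> t k \<le> t k'" for k k' using tinc by (simp add: lift_Suc_mono_le less_imp_le)
  have eps1: "\<epsilon> \<le> 1/4" using eps by (simp add: algebra_simps) (smt (verit) mult_nonneg_nonneg of_nat_0_le_iff)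
  have C1: "S (t K') + (1-\<epsilon>) * (real (t k) - real (t K')) \<le> S (t k)" if "K' \<le> k" for k
    using that
  proof (induction k rule: dec_induct)
    case base then show ?case by simp
  next
    case (step k)
    define n where "n = t (Suc k) - t k"
    have tS: "t (Suc k) = t k + n" using tinc[of k] by (simp add: n_def)
    have "(1-\<epsilon>) * real n \<le> (\<Sum>i<n. vw (t k + i))"
      by (rule good) (use step K'_def Nle[of k] in \<open>auto simp: n_def\<close>)
    then have "S (t k) + (1-\<epsilon>) * real n \<le> S (t (Suc k))"
      unfolding tS S_def sum_split by simp
    then show ?case using step.IH tS by (simp add: algebra_simps)
  qed
  have C3: "(3/4) * real n - (real M + 1) * real (t K') \<le> S n" if n: "t K' \<le> n" for n
  proof -
    obtain k where k: "K' \<le> k" "t k \<le> n" "n < t (Suc k)" using find_block[OF tinc n] by auto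
    define m where "m = n - t k"
    have nm: "n = t k + m" using k by (simp add: m_def)
    have Nk: "real (N k) \<le> \<epsilon> * real n"
    proof -
      have "real (N k) \<le> \<epsilon> * real (t k)" using Neps[of k] k K'_def by simp
      also have "\<dots> \<le> \<epsilon> * real n" using k eps by (intro mult_left_mono) auto
      finally show ?thesis .
    qed
    have T: "(1-\<epsilon>) * real m - (real M + 1) * real (N k) \<le> (\<Sum>i<m. vw (t k + i))"
    proof (cases "N k \<le> m")
      case True
      have "(1-\<epsilon>) * real m \<le> (\<Sum>i<m. vw (t k + i))"
        by (rule good) (use True k K'_def in \<open>auto simp: m_def\<close>)
      then show ?thesis by (smt (verit) mult_nonneg_nonneg of_nat_0_le_iff)
    next
      case False
      have a: "- real M * real m \<le> (\<Sum>i<m. vw (t k + i))" by (rule sum_lower) (rule low)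
      have "real m \<le> real (N k)" using False by simp
      have h0: "0 \<le> \<epsilon> * real m" using eps by simp
      have h1: "(1-\<epsilon>) * real m \<le> real m" using h0 by (simp add: algebra_simps)
      have h2: "(real M + 1) * real m \<le> (real M + 1) * real (N k)"
        by (rule mult_left_mono) (use \<open>real m \<le> real (N k)\<close> in auto)
      have h3: "real M * real m + real m \<le> (real M + 1) * real (N k)" using h2 by (simp add: algebra_simps)
      have "(1-\<epsilon>) * real m + real M * real m \<le> (real M + 1) * real (N k)" using h1 h3 by linarith
      then show ?thesis using a by linarith
    qed
    have "S n = S (t k) + (\<Sum>i<m. vw (t k + i))" unfolding nm S_def sum_split ..
    moreover have "S (t K') + (1-\<epsilon>) * (real (t k) - real (t K')) \<le> S (t k)" by (rule C1) (rule k(1))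
    moreover have "- real M * real (t K') \<le> S (t K')" by (rule Slow)
    moreover have "(real M + 1) * real (N k) \<le> (real M + 1) * (\<epsilon> * real n)"
      using Nk by (intro mult_left_mono) auto
    moreover have "real (t K') \<le> real n" using n by simp
    moreover have "(real M + 2) * \<epsilon> * real n \<le> 1/4 * real n" using eps by (intro mult_right_mono) auto
    moreover have "0 \<le> \<epsilon> * real (t K')" using eps by simp
    ultimately show ?thesis using T eps1 nm by (simp add: algebra_simps)
  qed
  have ev: "eventually (\<lambda>n. ereal (1/2) \<le> ereal ((\<Sum>i<n. vw i) / real n)) sequentially"
  proof (rule eventually_sequentiallyI[of "t K' + 4 * (M + 1) * t K' + 1"])
    fix n assume n: "t K' + 4 * (M + 1) * t K' + 1 \<le> n"
    then have n1: "t K' \<le> n" "0 < n" by auto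
    have "real (4 * (M + 1) * t K') \<le> real n" using n by linarith
    then have "4 * ((real M + 1) * real (t K')) \<le> real n" by (simp add: algebra_simps)
    then have "1/2 * real n \<le> S n" using C3[OF n1(1)] by linarith
    then have "1/2 \<le> S n / real n" using n1 by (simp add: field_simps)
    then show "ereal (1/2) \<le> ereal ((\<Sum>i<n. vw i) / real n)" by (simp add: S_def)
  qed
  show ?thesis unfolding LimAvg_def by (rule Liminf_bounded[OF ev])
qed




definition Sig0 :: "nat set" where "Sig0 = {0, 1}"

definition Al :: "nat \<Rightarrow> pwa" where
  "Al a = \<lparr>states = {0}, init = return_pmf 0, trans = (\<lambda>q \<sigma>. return_pmf 0),
           weight = (\<lambda>q \<sigma> q'. if \<sigma> = a then 1 else 0)\<rparr>"

lemma wf_Al: "wf_pwa Sig0 (Al a)" by (simp add: wf_pwa_def Al_def)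

definition Fr :: "nat \<Rightarrow> (nat \<Rightarrow> nat) \<Rightarrow> ereal" where
  "Fr a w = LimAvg (\<lambda>i. if w i = a then 1 else 0)"

lemma val_Al:
  assumes w: "w \<in> words Sig0"
  shows "AsLimAvg_val (Al a) w = Fr a w"
proof -
  interpret RMctx Sig0 "Al a" w by unfold_locales (use wf_Al w in \<open>simp_all add: Sig0_def\<close>)
  have "run_weights (Al a) w r = (\<lambda>i. if w i = a then 1 else 0)" for r
    by (rule ext) (simp add: run_weights_def Al_def)
  then show ?thesis by (intro val_eq) (simp add: Fr_def)
qed

lemma Fr_tail:
  assumes "\<forall>i\<ge>t. z i = x"
  shows "Fr a z = (if x = a then 1 else 0)"
proof (cases "x = a")
  case True
  then have "\<forall>i\<ge>t. (\<lambda>i. if z i = a then 1 else 0 :: real) i = 1" using assms by simp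
  then show ?thesis using True unfolding Fr_def by (simp add: LimAvg_ev1)
next
  case False
  then have "\<forall>i\<ge>t. (\<lambda>i. if z i = a then 1 else 0 :: real) i = 0" using assms by simp
  then show ?thesis using False unfolding Fr_def by (simp add: LimAvg_ev0)
qed

lemma Fr_sum_tail:
  assumes "\<forall>i\<ge>t. z i = x" "x \<in> Sig0"
  shows "Fr 0 z + Fr 1 z = 1"
  using assms Fr_tail[OF assms(1)] by (auto simp: Sig0_def)




lemma tail_bad:
  fixes f :: "nat \<Rightarrow> real"
  assumes eps: "0 < \<epsilon>" "\<epsilon> \<le> 1" and bad: "\<forall>N. \<exists>m\<ge>N. (\<Sum>i<m. f (t+i)) < (1-\<epsilon>) * real m"
  shows "LimAvg f \<le> ereal (1 - 3*\<epsilon>/4)"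
  unfolding LimAvg_def
proof (rule liminf_le_freq, intro allI)
  fix N'
  define s where "s = (\<Sum>i<t. f i)"
  define B where "B = \<bar>s\<bar> + real t"
  obtain m where m: "N' + nat \<lceil>4 * B / \<epsilon>\<rceil> + 1 \<le> m" "(\<Sum>i<m. f (t+i)) < (1-\<epsilon>) * real m"
    using bad by blast
  define n where "n = t + m"
  have mB: "4 * B / \<epsilon> \<le> real m" using m(1) by linarith
  then have "\<epsilon> * (4 * B / \<epsilon>) \<le> \<epsilon> * real m" using eps by (intro mult_left_mono) auto
  then have mB2: "4 * B \<le> \<epsilon> * real m" using eps by simp
  have npos: "0 < real n" using m(1) by (simp add: n_def)
  have Sn: "(\<Sum>i<n. f i) = s + (\<Sum>i<m. f (t+i))" unfolding n_def s_def by (rule sum_split)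
  have t1: "s - (1 - 3*\<epsilon>/4) * real t \<le> B"
  proof -
    have "0 \<le> (1 - 3*\<epsilon>/4) * real t" using eps by simp
    then show ?thesis unfolding B_def by linarith
  qed
  have "(\<Sum>i<n. f i) \<le> (1 - 3*\<epsilon>/4) * real n"
  proof -
    have "(\<Sum>i<n. f i) \<le> s + (1-\<epsilon>) * real m" using Sn m(2) by simp
    also have "\<dots> \<le> (1 - 3*\<epsilon>/4) * real n"
    proof -
      have e1: "(1 - 3*\<epsilon>/4) * real n = (1 - 3*\<epsilon>/4) * real t + real m - 3/4 * (\<epsilon> * real m)"
        by (simp add: n_def algebra_simps)
      have e2: "(1-\<epsilon>) * real m = real m - \<epsilon> * real m" by (simp add: algebra_simps)
      show ?thesis unfolding e1 e2 using t1 mB2 by linarith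
    qed
    finally show ?thesis .
  qed
  then have "(\<Sum>i<n. f i) / real n \<le> 1 - 3*\<epsilon>/4" using npos by (simp add: field_simps)
  moreover have "N' \<le> n" using m(1) by (simp add: n_def)
  ultimately show "\<exists>n\<ge>N'. ereal ((\<Sum>i<n. f i) / real n) \<le> ereal (1 - 3*\<epsilon>/4)" by auto
qed

lemma stake_sdrop_nth: "i < Suc H \<Longrightarrow> stake (Suc H) (sdrop t r) ! i = r !! (t + i)"
  by (simp only: stake_nth sdrop_snth)

lemma meas_stake_sdrop: "{r. stake n (sdrop t r) \<in> L} \<in> sets (stream_space (count_space (UNIV::nat set)))"
proof -
  have "(\<lambda>r. stake n (sdrop t r)) \<in> measurable (stream_space (count_space (UNIV::nat set))) (count_space UNIV)"
    by (rule measurable_compose[OF measurable_sdrop measurable_stake])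
  from measurable_sets[OF this, of L] show ?thesis by (simp add: vimage_def)
qed

locale Ctr =
  fixes A :: pwa
  assumes wfA: "wf_pwa Sig0 A"
    and H: "\<forall>w\<in>words Sig0. AsLimAvg_val A w = Fr 0 w + Fr 1 w"
begin

lemma finSig0: "finite Sig0" by (simp add: Sig0_def)

lemma RMw: "w \<in> words Sig0 \<Longrightarrow> RMctx Sig0 A w"
  by unfold_locales (use wfA finSig0 in auto)

lemma finSt: "finite (states A)" using wfA by (simp add: wf_pwa_def)

definition Mb :: nat where
  "Mb = nat \<lceil>Max (insert 0 ((\<lambda>(q,\<sigma>,q'). \<bar>real_of_rat (weight A q \<sigma> q')\<bar>) ` (states A \<times> Sig0 \<times> states A)))\<rceil>"

lemma Mb_bound:
  assumes "q \<in> states A" "\<sigma> \<in> Sig0" "q' \<in> states A"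
  shows "\<bar>real_of_rat (weight A q \<sigma> q')\<bar> \<le> real Mb"
proof -
  let ?X = "insert 0 ((\<lambda>(q,\<sigma>,q'). \<bar>real_of_rat (weight A q \<sigma> q')\<bar>) ` (states A \<times> Sig0 \<times> states A))"
  have "finite ?X" using finSt finSig0 by simp
  moreover have "\<bar>real_of_rat (weight A q \<sigma> q')\<bar> \<in> ?X"
    using assms by (intro insertI2 image_eqI[where x="(q,\<sigma>,q')"]) auto
  ultimately have "\<bar>real_of_rat (weight A q \<sigma> q')\<bar> \<le> Max ?X" by (rule Max_ge)
  also have "\<dots> \<le> real Mb" unfolding Mb_def by linarith
  finally show ?thesis .
qed

definition eps :: real where "eps = 1 / (4 * (real Mb + 2))"

lemma eps_pos: "0 < eps" by (simp add: eps_def)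
lemma eps_bound: "(real Mb + 2) * eps \<le> 1/4" by (simp add: eps_def)
lemma eps_le1: "eps \<le> 1/8"
proof -
  have "8 \<le> 4 * (real Mb + 2)" by simp
  then show ?thesis unfolding eps_def by (simp add: field_simps)
qed

definition badL :: "nat \<Rightarrow> nat \<Rightarrow> nat \<Rightarrow> nat list \<Rightarrow> bool" where
  "badL x N Hh xs \<longleftrightarrow> (\<exists>m. N \<le> m \<and> m \<le> Hh \<and> (\<Sum>i<m. real_of_rat (weight A (xs ! i) x (xs ! Suc i))) < (1 - eps) * real m)"

definition BS :: "nat \<Rightarrow> nat \<Rightarrow> nat \<Rightarrow> nat stream set" where
  "BS x N Hh = {r. stake (Suc Hh) r \<in> {xs. badL x N Hh xs}}"

definition Reach :: "nat set" where
  "Reach = {q \<in> states A. \<exists>u\<in>words Sig0. \<exists>t. 0 < measure (run_measure A u) {r. r !! t = q}}"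

lemma snth_stake_set: "{r. r !! t = q} = {r. stake (Suc t) r \<in> {xs. xs ! t = q}}"
  by (simp only: mem_Collect_eq stake_nth[OF lessI])

end




context Ctr begin

lemma sum_stake_sdrop:
  assumes "m \<le> Hh"
  shows "(\<Sum>i<m. real_of_rat (weight A (stake (Suc Hh) (sdrop t r) ! i) x (stake (Suc Hh) (sdrop t r) ! Suc i)))
       = (\<Sum>i<m. real_of_rat (weight A (r !! (t + i)) x (r !! Suc (t + i))))"
proof (rule sum.cong[OF refl])
  fix i assume "i \<in> {..<m}"
  then have "i < Suc Hh" "Suc i < Suc Hh" using assms by auto
  then show "real_of_rat (weight A (stake (Suc Hh) (sdrop t r) ! i) x (stake (Suc Hh) (sdrop t r) ! Suc i))
       = real_of_rat (weight A (r !! (t + i)) x (r !! Suc (t + i)))"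
    by (simp only: stake_sdrop_nth add_Suc_right)
qed

lemma W:
  assumes q: "q \<in> states A" and u: "u \<in> words Sig0" and p: "0 < measure (run_measure A u) {r. r !! t = q}"
    and x: "x \<in> Sig0" and \<delta>: "0 < \<delta>"
  shows "\<exists>N. \<forall>N'\<ge>N. \<forall>Hh. measure (run_measure (Aq A q) (\<lambda>_. x)) (BS x N' Hh) \<le> \<delta>"
proof -
  have le1: "eps \<le> 1" using eps_le1 by simp
  define pu where "pu = measure (run_measure A u) {r. r !! t = q}"
  define z where "z i = (if i < t then u i else x)" for i
  have z: "z \<in> words Sig0" using u x by (auto simp: words_def z_def)
  interpret Z: RMctx Sig0 A z by (rule RMw[OF z])
  have pz: "measure (run_measure A z) {r. r !! t = q} = pu"
    unfolding snth_stake_set pu_def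
    by (rule agree[where Sig=Sig0]) (use RMw[OF z] RMw[OF u] in \<open>auto simp: z_def\<close>)
  have val: "AsLimAvg_val A z = 1"
    using H z Fr_sum_tail[of t z x] x by (auto simp: z_def)
  have lt: "ereal (1 - eps/2) < AsLimAvg_val A z" using val eps_pos by simp
  have AEz: "AE r in Z.P. ereal (1 - eps/2) \<le> LimAvg (run_weights A z r)"
    by (rule Z.val_AE[OF lt])
  define C where "C N = {r. \<exists>m\<ge>N. (\<Sum>i<m. run_weights A z r (t+i)) < (1-eps) * real m}" for N
  have Cm: "C N \<in> sets Z.P" for N
  proof -
    have each: "{r. (\<Sum>i<m. run_weights A z r (t+i)) < (1-eps) * real m} \<in> sets (stream_space (count_space UNIV))" for m
    proof -
      have f: "(\<lambda>r. \<Sum>i<m. run_weights A z r (t+i)) \<in> borel_measurable (stream_space (count_space UNIV))"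
        by (rule borel_measurable_sum) (rule meas_rw)
      from measurable_sets[OF f, of "{..<(1-eps) * real m}"] show ?thesis by (simp add: vimage_def)
    qed
    have "C N = (\<Union>m\<in>{N..}. {r. (\<Sum>i<m. run_weights A z r (t+i)) < (1-eps) * real m})"
      by (auto simp: C_def)
    also have "\<dots> \<in> sets (stream_space (count_space UNIV))"
      using each by (intro sets.countable_UN') auto
    finally show ?thesis using Z.sets_P by simp
  qed
  have dec: "decseq C" by (auto simp: decseq_def C_def) (meson order_trans)
  have null: "measure Z.P (\<Inter>N. C N) = 0"
  proof -
    have AE0: "AE r in Z.P. r \<notin> (\<Inter>N. C N)"
      using AEz
    proof eventually_elim
      case (elim r)
      show ?case
      proof
        assume "r \<in> (\<Inter>N. C N)"
        then have "\<forall>N. \<exists>m\<ge>N. (\<Sum>i<m. run_weights A z r (t+i)) < (1-eps) * real m" by (auto simp: C_def)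
        then have "LimAvg (run_weights A z r) \<le> ereal (1 - 3*eps/4)"
          by (rule tail_bad[OF eps_pos le1])
        with elim have "ereal (1 - eps/2) \<le> ereal (1 - 3*eps/4)" by (rule order_trans)
        then show False using eps_pos by simp
      qed
    qed
    have "(\<Inter>N. C N) \<in> sets Z.P" using Cm by auto
    then have "(\<Inter>N. C N) \<in> null_sets Z.P" using AE0 by (simp add: AE_iff_null_sets)
    then show ?thesis by (simp add: measure_def null_setsD1)
  qed
  have lim: "(\<lambda>N. measure Z.P (C N)) \<longlonglongrightarrow> 0"
    using Z.p.finite_Lim_measure_decseq[OF _ dec] Cm null by auto
  have dp: "0 < \<delta> * pu" using \<delta> p by (simp add: pu_def)
  obtain N where N: "measure Z.P (C N) < \<delta> * pu"
    using order_tendstoD(2)[OF lim dp] by (auto simp: eventually_sequentially)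
  show ?thesis
  proof (intro exI allI impI)
    fix N' Hh assume N': "N \<le> N'"
    have shift: "(\<lambda>i. z (t + i)) = (\<lambda>_. x)" by (auto simp: z_def)
    have sub: "{r. r !! t = q \<and> stake (Suc Hh) (sdrop t r) \<in> {xs. badL x N' Hh xs}} \<subseteq> C N"
    proof
      fix r assume "r \<in> {r. r !! t = q \<and> stake (Suc Hh) (sdrop t r) \<in> {xs. badL x N' Hh xs}}"
      then obtain m where m: "N' \<le> m" "m \<le> Hh"
        "(\<Sum>i<m. real_of_rat (weight A (stake (Suc Hh) (sdrop t r) ! i) x (stake (Suc Hh) (sdrop t r) ! Suc i))) < (1 - eps) * real m"
        by (auto simp: badL_def)
      have "(\<Sum>i<m. run_weights A z r (t+i)) = (\<Sum>i<m. real_of_rat (weight A (r !! (t + i)) x (r !! Suc (t + i))))"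
        by (rule sum.cong) (auto simp: run_weights_def z_def)
      then have lt: "(\<Sum>i<m. run_weights A z r (t+i)) < (1-eps) * real m"
        using m(3) sum_stake_sdrop[OF m(2), of t r x] by linarith
      show "r \<in> C N" unfolding C_def using m(1) N' lt by (intro CollectI exI[of _ m]) auto
    qed
    have "measure Z.P {r. r !! t = q \<and> stake (Suc Hh) (sdrop t r) \<in> {xs. badL x N' Hh xs}} \<le> measure Z.P (C N)"
      by (rule Z.p.finite_measure_mono[OF sub Cm])
    also have "\<dots> < \<delta> * pu" by (rule N)
    finally have "pu * measure (run_measure (Aq A q) (\<lambda>_. x)) (BS x N' Hh) < \<delta> * pu"
      using Z.markov[OF q, of t Hh "{xs. badL x N' Hh xs}"] pz shift by (simp add: BS_def)
    then show "measure (run_measure (Aq A q) (\<lambda>_. x)) (BS x N' Hh) \<le> \<delta>"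
      using p by (simp add: pu_def mult.commute)
  qed
qed

end




context Ctr begin

lemma Wunif:
  assumes \<delta>: "0 < \<delta>"
  shows "\<exists>N. \<forall>q\<in>Reach. \<forall>x\<in>Sig0. \<forall>N'\<ge>N. \<forall>Hh. measure (run_measure (Aq A q) (\<lambda>_. x)) (BS x N' Hh) \<le> \<delta>"
proof -
  let ?F = "Reach \<times> Sig0"
  have fin: "finite ?F" using finSt finSig0 by (auto simp: Reach_def)
  have "\<forall>y\<in>?F. \<exists>N. \<forall>N'\<ge>N. \<forall>Hh. measure (run_measure (Aq A (fst y)) (\<lambda>_. snd y)) (BS (snd y) N' Hh) \<le> \<delta>"
  proof
    fix y assume y: "y \<in> ?F"
    then obtain q x where qx: "y = (q, x)" "q \<in> Reach" "x \<in> Sig0" by auto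
    then obtain u t where "q \<in> states A" "u \<in> words Sig0" "0 < measure (run_measure A u) {r. r !! t = q}"
      by (auto simp: Reach_def)
    from W[OF this qx(3) \<delta>] show "\<exists>N. \<forall>N'\<ge>N. \<forall>Hh. measure (run_measure (Aq A (fst y)) (\<lambda>_. snd y)) (BS (snd y) N' Hh) \<le> \<delta>"
      using qx by simp
  qed
  then obtain f where f: "\<forall>y\<in>?F. \<forall>N'\<ge>f y. \<forall>Hh. measure (run_measure (Aq A (fst y)) (\<lambda>_. snd y)) (BS (snd y) N' Hh) \<le> \<delta>"
    by (metis bchoice)
  define N where "N = Max (insert 0 (f ` ?F))"
  have fN: "f y \<le> N" if "y \<in> ?F" for y unfolding N_def using fin that by (intro Max_ge) auto
  then show ?thesis
  proof (intro exI[of _ N] ballI allI impI)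
    fix q x N' Hh assume "q \<in> Reach" "x \<in> Sig0" "N \<le> N'"
    moreover have "f (q, x) \<le> N" using \<open>q \<in> Reach\<close> \<open>x \<in> Sig0\<close> fN by simp
    ultimately show "measure (run_measure (Aq A q) (\<lambda>_. x)) (BS x N' Hh) \<le> \<delta>"
      using f[rule_format, of "(q,x)" N' Hh] by simp
  qed
qed

definition Nf :: "nat \<Rightarrow> nat" where
  "Nf k = (SOME N. \<forall>q\<in>Reach. \<forall>x\<in>Sig0. \<forall>N'\<ge>N. \<forall>Hh. measure (run_measure (Aq A q) (\<lambda>_. x)) (BS x N' Hh) \<le> (1/2)^k)"

lemma Nf: "q \<in> Reach \<Longrightarrow> x \<in> Sig0 \<Longrightarrow> Nf k \<le> N' \<Longrightarrow> measure (run_measure (Aq A q) (\<lambda>_. x)) (BS x N' Hh) \<le> (1/2)^k"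
proof -
  have "\<exists>N. \<forall>q\<in>Reach. \<forall>x\<in>Sig0. \<forall>N'\<ge>N. \<forall>Hh. measure (run_measure (Aq A q) (\<lambda>_. x)) (BS x N' Hh) \<le> (1/2)^k"
    by (rule Wunif) simp
  from someI_ex[OF this] show "q \<in> Reach \<Longrightarrow> x \<in> Sig0 \<Longrightarrow> Nf k \<le> N' \<Longrightarrow> ?thesis"
    unfolding Nf_def by blast
qed

primrec tb :: "nat \<Rightarrow> nat" where
  "tb 0 = 0"
| "tb (Suc k) = tb k + (Suc k * tb k + Nf k + 4 * (Mb + 2) * Nf (Suc k) + 1)"

definition nb :: "nat \<Rightarrow> nat" where "nb k = tb (Suc k) - tb k"

lemma nb_eq: "nb k = Suc k * tb k + Nf k + 4 * (Mb + 2) * Nf (Suc k) + 1" by (simp add: nb_def)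
lemma tb_Suc: "tb (Suc k) = tb k + nb k" by (simp add: nb_def)
lemma tinc: "tb k < tb (Suc k)" by simp
lemma tmono: "k \<le> k' \<Longrightarrow> tb k \<le> tb k'" by (simp add: lift_Suc_mono_le less_imp_le)
lemma tge: "k \<le> tb k" by (induction k) auto
lemma Nf_nb: "Nf k \<le> nb k" by (simp add: nb_eq)
lemma t_growth: "(real k + 2) * real (tb k) \<le> real (tb (Suc k))"
proof -
  have e: "real (tb (Suc k)) = (real k + 2) * real (tb k) + (real (Nf k) + 4 * (real Mb + 2) * real (Nf (Suc k)) + 1)"
    by (simp add: algebra_simps)
  have "0 \<le> real (Nf k) + 4 * (real Mb + 2) * real (Nf (Suc k)) + 1" by simp
  then show ?thesis using e by linarith
qed

lemma Nf_eps: "1 \<le> k \<Longrightarrow> real (Nf k) \<le> eps * real (tb k)"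
proof -
  assume "1 \<le> k"
  then obtain j where j: "k = Suc j" by (cases k) auto
  have "4 * (Mb + 2) * Nf k \<le> tb k" using j by simp
  then have "real (4 * (Mb + 2) * Nf k) \<le> real (tb k)" by (simp only: of_nat_le_iff)
  then have h: "4 * (real Mb + 2) * real (Nf k) \<le> real (tb k)" by (simp add: algebra_simps)
  have pos: "0 < 4 * (real Mb + 2)" by simp
  have h2: "real (Nf k) * (4 * (real Mb + 2)) \<le> real (tb k)" by (metis mult.commute h)
  have "real (Nf k) \<le> real (tb k) / (4 * (real Mb + 2))" using h2 pos by (simp add: pos_le_divide_eq)
  moreover have "eps * real (tb k) = real (tb k) / (4 * (real Mb + 2))" by (simp add: eps_def)
  ultimately show ?thesis by simp
qed

definition blk :: "nat \<Rightarrow> nat" where "blk i = (LEAST k. i < tb (Suc k))"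

lemma blk_eq: "tb k \<le> i \<Longrightarrow> i < tb (Suc k) \<Longrightarrow> blk i = k"
  unfolding blk_def
proof (rule Least_equality)
  fix j assume "tb k \<le> i" "i < tb (Suc j)"
  show "k \<le> j"
  proof (rule ccontr)
    assume "\<not> k \<le> j" then have "Suc j \<le> k" by simp
    then have "tb (Suc j) \<le> tb k" by (rule tmono)
    then show False using \<open>tb k \<le> i\<close> \<open>i < tb (Suc j)\<close> by simp
  qed
qed

definition vw :: "nat \<Rightarrow> nat" where "vw i = blk i mod 2"

lemma v_words: "vw \<in> words Sig0" by (auto simp: words_def vw_def Sig0_def)

lemma v_block: "i < nb k \<Longrightarrow> vw (tb k + i) = k mod 2"
proof -
  assume i: "i < nb k"
  have h: "tb k + i < tb (Suc k)" unfolding tb_Suc using i by simp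
  have "blk (tb k + i) = k" by (rule blk_eq) (simp, rule h)
  then show ?thesis by (simp add: vw_def)
qed

lemma Fr_v: "Fr a vw = 0"
proof (rule antisym)
  show "0 \<le> Fr a vw" unfolding Fr_def LimAvg_def
    by (rule Liminf_bounded) (auto intro!: always_eventually sum_nonneg divide_nonneg_nonneg)
  show "Fr a vw \<le> 0"
  proof (rule ereal_le_epsilon2)
    fix e :: real assume e: "0 < e"
    have "Fr a vw \<le> ereal e" unfolding Fr_def LimAvg_def
    proof (rule liminf_le_freq, intro allI)
      fix N
      define c where "c = nat \<lceil>1/e\<rceil>"
      define k where "k = 2 * (N + c) + (if a = 0 then 1 else 0)"
      have kpar: "k mod 2 \<noteq> a" using k_def by (cases "a = 0") auto
      have kN: "N \<le> k" by (simp add: k_def)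
      have ke: "1/e \<le> real k + 2"
      proof -
        have k2: "1/e \<le> real c" unfolding c_def by (rule real_nat_ceiling_ge)
        have k1: "c \<le> k" unfolding k_def by simp
        then have "real c \<le> real k" by (simp only: of_nat_le_iff)
        then show ?thesis using k2 by linarith
      qed
      define n where "n = tb (Suc k)"
      have nN: "N \<le> n" using tge[of "Suc k"] kN by (simp add: n_def)
      have n0: "0 < n" unfolding n_def by (rule le_less_trans[OF le0 tinc])
      have npos: "0 < real n" using n0 by simp
      have cnt: "(\<Sum>i<n. if vw i = a then 1 else 0 :: real) \<le> real (tb k)"
      proof -
        have "(\<Sum>i<n. if vw i = a then 1 else 0 :: real) =
            (\<Sum>i<tb k. if vw i = a then 1 else 0 :: real) + (\<Sum>i<nb k. if vw (tb k + i) = a then 1 else 0 :: real)"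
          unfolding n_def tb_Suc by (rule sum_split)
        also have "(\<Sum>i<nb k. if vw (tb k + i) = a then 1 else 0 :: real) = 0"
          using kpar by (intro sum.neutral) (auto simp: v_block)
        also have "(\<Sum>i<tb k. if vw i = a then 1 else 0 :: real) \<le> (\<Sum>i<tb k. 1)"
          by (intro sum_mono) auto
        finally show ?thesis by simp
      qed
      have "(\<Sum>i<n. if vw i = a then 1 else 0 :: real) / real n \<le> real (tb k) / real n"
        using cnt npos by (simp add: divide_right_mono)
      also have "\<dots> \<le> e"
      proof -
        have "(real k + 2) * real (tb k) \<le> real n" using t_growth[of k] by (simp add: n_def)
        moreover have "1 \<le> e * (real k + 2)" using ke e by (simp add: field_simps)
        ultimately have "real (tb k) \<le> e * real n"
        proof -
          assume h1: "(real k + 2) * real (tb k) \<le> real n" and h2: "1 \<le> e * (real k + 2)"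
          have "1 * real (tb k) \<le> (e * (real k + 2)) * real (tb k)" by (rule mult_right_mono[OF h2]) simp
          also have "\<dots> = e * ((real k + 2) * real (tb k))" by simp
          also have "\<dots> \<le> e * real n" by (rule mult_left_mono[OF h1]) (use e in simp)
          finally show ?thesis by simp
        qed
        then show ?thesis using npos by (simp add: field_simps)
      qed
      finally show "\<exists>n\<ge>N. ereal ((\<Sum>i<n. if vw i = a then 1 else 0) / real n) \<le> ereal e"
        using nN by auto
    qed
    then show "Fr a vw \<le> 0 + ereal e" by simp
  qed
qed

lemma val_v: "AsLimAvg_val A vw = 0"
  using H v_words Fr_v by simp

end




context Ctr begin

definition Ek :: "nat \<Rightarrow> nat stream set" where
  "Ek k = {r. stake (Suc (nb k)) (sdrop (tb k) r) \<in> {xs. badL (k mod 2) (Nf k) (nb k) xs}}"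

lemma vctx: "RMctx Sig0 A vw" by (rule RMw[OF v_words])

lemma Ek_meas: "Ek k \<in> sets (run_measure A vw)"
  unfolding Ek_def by (subst RMctx.sets_P[OF vctx]) (rule meas_stake_sdrop)

lemma Ek_bound: "measure (run_measure A vw) (Ek k) \<le> real (card (states A)) * (1/2)^k"
proof -
  interpret V: RMctx Sig0 A vw by (rule vctx)
  let ?L = "{xs. badL (k mod 2) (Nf k) (nb k) xs}"
  define F where "F q = {r. r !! tb k = q \<and> stake (Suc (nb k)) (sdrop (tb k) r) \<in> ?L}" for q
  have Fm: "F q \<in> sets V.P" for q
  proof -
    have "F q = {r. r !! tb k = q} \<inter> {r. stake (Suc (nb k)) (sdrop (tb k) r) \<in> ?L}" by (auto simp: F_def)
    moreover have "{r. r !! tb k = q} \<in> sets V.P" unfolding snth_stake_set by (rule V.meas_stake)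
    moreover have "{r. stake (Suc (nb k)) (sdrop (tb k) r) \<in> ?L} \<in> sets V.P"
      by (subst V.sets_P) (rule meas_stake_sdrop)
    ultimately show ?thesis by simp
  qed
  have UFm: "(\<Union>q\<in>states A. F q) \<in> sets V.P" using Fm finSt by (intro sets.finite_UN) auto
  have eq: "measure V.P (Ek k) = measure V.P (\<Union>q\<in>states A. F q)"
    by (rule measure_eq_AE) (use V.valid Ek_meas UFm in \<open>auto simp: Ek_def F_def elim!: eventually_mono\<close>)
  have each: "measure V.P (F q) \<le> (1/2)^k" if q: "q \<in> states A" for q
  proof -
    have mk: "measure V.P (F q) = measure V.P {r. r !! tb k = q} *
        measure (run_measure (Aq A q) (\<lambda>i. vw (tb k + i))) {r. stake (Suc (nb k)) r \<in> ?L}"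
      unfolding F_def by (rule V.markov[OF q])
    show ?thesis
    proof (cases "measure V.P {r. r !! tb k = q} = 0")
      case True then show ?thesis using mk by simp
    next
      case False
      then have pos: "0 < measure V.P {r. r !! tb k = q}" using measure_nonneg[of V.P] by (simp add: less_le)
      then have qR: "q \<in> Reach" using q v_words unfolding Reach_def by blast
      have xS: "k mod 2 \<in> Sig0" by (auto simp: Sig0_def)
      have c1: "RMctx Sig0 (Aq A q) (\<lambda>i. vw (tb k + i))" by (rule RMctx_Aq[OF vctx q])
      have c2: "RMctx Sig0 (Aq A q) (\<lambda>_. k mod 2)"
        by unfold_locales (use wf_Aq[OF wfA q] xS finSig0 in \<open>auto simp: words_def\<close>)
      have "measure (run_measure (Aq A q) (\<lambda>i. vw (tb k + i))) {r. stake (Suc (nb k)) r \<in> ?L}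
          = measure (run_measure (Aq A q) (\<lambda>_. k mod 2)) {r. stake (Suc (nb k)) r \<in> ?L}"
        by (rule agree[OF c1 c2]) (simp add: v_block)
      also have "\<dots> = measure (run_measure (Aq A q) (\<lambda>_. k mod 2)) (BS (k mod 2) (Nf k) (nb k))"
        by (simp add: BS_def)
      also have "\<dots> \<le> (1/2)^k" by (rule Nf[OF qR xS order.refl])
      finally have b: "measure (run_measure (Aq A q) (\<lambda>i. vw (tb k + i))) {r. stake (Suc (nb k)) r \<in> ?L} \<le> (1/2)^k" .
      have le1: "measure V.P {r. r !! tb k = q} \<le> 1" by (rule V.p.prob_le_1)
      have "measure V.P {r. r !! tb k = q} * measure (run_measure (Aq A q) (\<lambda>i. vw (tb k + i))) {r. stake (Suc (nb k)) r \<in> ?L}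
          \<le> 1 * (1/2)^k"
        by (rule mult_mono[OF le1 b]) auto
      then show ?thesis using mk by simp
    qed
  qed
  have "measure V.P (\<Union>q\<in>states A. F q) \<le> (\<Sum>q\<in>states A. measure V.P (F q))"
    by (rule V.p.finite_measure_subadditive_finite) (use finSt Fm in auto)
  also have "\<dots> \<le> (\<Sum>q\<in>states A. (1/2)^k)" by (rule sum_mono) (rule each)
  also have "\<dots> = real (card (states A)) * (1/2)^k" by simp
  finally show ?thesis using eq by simp
qed

lemma contradiction: False
proof -
  interpret V: RMctx Sig0 A vw by (rule vctx)
  have summ: "summable (\<lambda>k. measure V.P (Ek k))"
  proof (rule summable_comparison_test)
    show "\<exists>N. \<forall>n\<ge>N. norm (measure V.P (Ek n)) \<le> real (card (states A)) * (1/2)^n"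
      using Ek_bound by auto
    show "summable (\<lambda>n. real (card (states A)) * (1/2::real)^n)"
      by (intro summable_mult summable_geometric) simp
  qed
  have BC: "AE r in V.P. eventually (\<lambda>k. r \<in> space V.P - Ek k) sequentially"
    by (rule borel_cantelli_AE1[OF Ek_meas _ summ]) (simp add: less_top[symmetric])
  have AE: "AE r in V.P. ereal (1/2) \<le> LimAvg (run_weights A vw r)"
    using BC V.valid
  proof eventually_elim
    case (elim r)
    then obtain K where K: "\<And>k. K \<le> k \<Longrightarrow> r \<notin> Ek k" by (auto simp: eventually_sequentially V.space_P)
    show ?case
    proof (rule block_arith[where t=tb and N=Nf and M=Mb and \<epsilon>=eps and K=K])
      show "\<bar>run_weights A vw r i\<bar> \<le> real Mb" for i
        unfolding run_weights_def using elim v_words by (intro Mb_bound) (auto simp: words_def simp del: snth.simps)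
      show "tb k < tb (Suc k)" for k by (rule tinc)
      show "0 < eps" by (rule eps_pos)
      show "(real Mb + 2) * eps \<le> 1/4" by (rule eps_bound)
      show "Nf k \<le> tb (Suc k) - tb k" for k using Nf_nb by (simp add: nb_def)
      show "real (Nf k) \<le> eps * real (tb k)" if "1 \<le> k" for k by (rule Nf_eps[OF that])
      fix k m assume km: "K \<le> k" "Nf k \<le> m" "m \<le> tb (Suc k) - tb k"
      have mnb: "m \<le> nb k" using km by (simp add: nb_def)
      have "r \<notin> Ek k" by (rule K[OF km(1)])
      then have "\<not> (\<Sum>i<m. real_of_rat (weight A (stake (Suc (nb k)) (sdrop (tb k) r) ! i) (k mod 2)
                 (stake (Suc (nb k)) (sdrop (tb k) r) ! Suc i))) < (1 - eps) * real m"
        using km(2) mnb unfolding Ek_def badL_def by auto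
      then have "(1 - eps) * real m \<le> (\<Sum>i<m. real_of_rat (weight A (r !! (tb k + i)) (k mod 2) (r !! Suc (tb k + i))))"
        using sum_stake_sdrop[OF mnb, of "tb k" r "k mod 2"] by linarith
      also have "\<dots> = (\<Sum>i<m. run_weights A vw r (tb k + i))"
        by (rule sum.cong) (use mnb in \<open>auto simp: run_weights_def v_block\<close>)
      finally show "(1 - eps) * real m \<le> (\<Sum>i<m. run_weights A vw r (tb k + i))" .
    qed
  qed
  have "ereal (1/2) \<le> AsLimAvg_val A vw" by (rule V.val_ge[OF AE])
  then show False using val_v by simp
qed

end

theorem lemma26_aux:
  shows "\<exists>Sig A1 A2. finite Sig \<and> Sig \<noteq> {} \<and> wf_pwa Sig A1 \<and> wf_pwa Sig A2 \<and>
    \<not> (\<exists>A. wf_pwa Sig A \<and>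
          (\<forall>w \<in> words Sig. AsLimAvg_val A w = AsLimAvg_val A1 w + AsLimAvg_val A2 w))"
proof (intro exI conjI)
  show "finite Sig0" "Sig0 \<noteq> {}" by (simp_all add: Sig0_def)
  show "wf_pwa Sig0 (Al 0)" "wf_pwa Sig0 (Al 1)" by (rule wf_Al)+
  show "\<not> (\<exists>A. wf_pwa Sig0 A \<and> (\<forall>w\<in>words Sig0. AsLimAvg_val A w = AsLimAvg_val (Al 0) w + AsLimAvg_val (Al 1) w))"
  proof
    assume "\<exists>A. wf_pwa Sig0 A \<and> (\<forall>w\<in>words Sig0. AsLimAvg_val A w = AsLimAvg_val (Al 0) w + AsLimAvg_val (Al 1) w)"
    then obtain A where A: "wf_pwa Sig0 A" "\<forall>w\<in>words Sig0. AsLimAvg_val A w = AsLimAvg_val (Al 0) w + AsLimAvg_val (Al 1) w"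
      by blast
    interpret Ctr A
      by unfold_locales (use A val_Al in auto)
    show False by (rule contradiction)
  qed
qed


theorem lemma26:
  shows "\<exists>Sig A1 A2. finite Sig \<and> Sig \<noteq> {} \<and> wf_pwa Sig A1 \<and> wf_pwa Sig A2 \<and>
    \<not> (\<exists>A. wf_pwa Sig A \<and>
          (\<forall>w \<in> words Sig. AsLimAvg_val A w = AsLimAvg_val A1 w + AsLimAvg_val A2 w))"
    by (rule lemma26_aux)

end
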